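(* There exist constants $\varepsilon_0>0$ and $C_1>0$ such that the following holds. Let $r>0$, $\delta>0$, $R:=r/\delta$, $\varepsilon:=R+\tfrac12-\lfloor R+\tfrac12\rfloor$. If $\varepsilon\in[0,\varepsilon_0]$ and $R$ is sufficiently large, then $$\int_{-\pi}^{\pi}\Delta_\delta(r\cos\theta)\cos\theta\,d\theta\ \ge\ C_1\,\frac{\delta^{3/2}}{\sqrt r}.$$
   Context: For $\delta>0$, $Q_\delta(t):=\delta\lfloor t/\delta+1/2\rfloor$ and $\Delta_\delta(t):=t-Q_\delta(t)$. *)

theory Defs
  imports "HOL-Analysis.Analysis"
begin

definition Qd :: "real \<Rightarrow> real \<Rightarrow> real" where
  "Qd \<delta> t = \<delta> * of_int \<lfloor>t / \<delta> + 1/2\<rfloor>"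

definition Dd :: "real \<Rightarrow> real \<Rightarrow> real" where
  "Dd \<delta> t = t - Qd \<delta> t"

end

theory Submission
  imports Defs "HOL-Analysis.Analysis"
begin


lemma trig_trap:
  fixes a b k :: real
  assumes ab: "a \<le> b" and k: "\<And>x. a \<le> x \<Longrightarrow> x \<le> b \<Longrightarrow> k \<le> cos x"
  shows "k * (b - a)^3 / 12 \<le> sin b - sin a - (cos a + cos b) * (b - a) / 2"
proof -
  define p1 where "p1 x = (cos x - cos a)/2 + (x-a) * sin x/2 - k*(x-a)^2/4" for x
  define p where "p x = sin x - sin a - (cos a + cos x) * (x - a) / 2 - k * (x - a)^3 / 12" for x
  have d1: "DERIV p1 x :> (x-a)*(cos x - k)/2" for x
    unfolding p1_def
    by (auto intro!: derivative_eq_intros simp: field_simps power2_eq_square)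
  have d: "DERIV p x :> p1 x" for x
    unfolding p_def p1_def
    by (auto intro!: derivative_eq_intros simp: field_simps power2_eq_square power3_eq_cube)
  have p1nn: "0 \<le> p1 x" if "a \<le> x" "x \<le> b" for x
  proof -
    have "p1 a \<le> p1 x"
      apply (rule DERIV_nonneg_imp_nondecreasing[OF that(1)])
      using d1 k that by (auto intro!: exI mult_nonneg_nonneg)
    then show ?thesis by (simp add: p1_def)
  qed
  have "p a \<le> p b"
    apply (rule DERIV_nonneg_imp_nondecreasing[OF ab])
    using d p1nn by blast
  then show ?thesis by (simp add: p_def)
qed

definition D1 :: "real \<Rightarrow> real" where "D1 x = x - of_int \<lfloor>x + 1/2\<rfloor>"

lemma D1_bound: "-1/2 \<le> D1 x" "D1 x < 1/2"
  unfolding D1_def using floor_correct[of "x+1/2"] by linarith+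

lemma D1_meas: "(\<lambda>t. D1 (R * cos t) * cos t) \<in> borel_measurable borel"
  unfolding D1_def by measurable

lemma f_integrable: "(\<lambda>t. D1 (R * cos t) * cos t) integrable_on {a..b}"
proof (rule measurable_bounded_by_integrable_imp_integrable[where g="\<lambda>_. 1"])
  show "(\<lambda>t. D1 (R * cos t) * cos t) \<in> borel_measurable (lebesgue_on {a..b})"
    using D1_meas 
    by (intro measurable_restrict_space1 measurable_completion) (simp add: measurable_lborel1)
  show "norm (D1 (R * cos t) * cos t) \<le> 1" for t
  proof -
    have "\<bar>D1 (R * cos t)\<bar> \<le> 1" using D1_bound[of "R * cos t"] by linarith
    moreover have "\<bar>cos t\<bar> \<le> 1" by simp
    ultimately show ?thesis unfolding real_norm_def abs_mult by (simp add: mult_le_one)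
  qed
  show "(\<lambda>_. 1::real) integrable_on {a..b}" by (rule integrable_const_ivl)
  show "{a..b} \<in> sets lebesgue" by simp
qed

abbreviation ff :: "real \<Rightarrow> real \<Rightarrow> real" where "ff R t \<equiv> D1 (R * cos t) * cos t"

lemma int_mono_left:
  fixes f g :: "real \<Rightarrow> real"
  assumes "f integrable_on {a..b}" "g integrable_on {a..b}" "\<And>x. a < x \<Longrightarrow> x \<le> b \<Longrightarrow> g x \<le> f x"
  shows "integral {a..b} g \<le> integral {a..b} f"
proof -
  let ?h = "\<lambda>x. if x = a then g x else f x"
  have e: "integral {a..b} f = integral {a..b} ?h"
    by (rule integral_spike[where S="{a}"]) auto
  have hi: "?h integrable_on {a..b}"
    by (rule integrable_spike[OF assms(1), where S="{a}"]) auto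
  have "integral {a..b} g \<le> integral {a..b} ?h"
    by (rule integral_le[OF assms(2) hi]) (use assms(3) in auto)
  then show ?thesis using e by simp
qed

lemma piece:
  fixes R a b k j :: real
  assumes R: "R > 0" and j: "j \<in> \<int>" "0 \<le> j" and ab: "0 \<le> a" "a \<le> b" "b \<le> pi/2"
    and ca: "R * cos a = j + 1/2" and cb: "R * cos b = j - 1/2" and k: "k \<le> cos b"
  shows "j * k * (b - a)^3 / 12 \<le> integral {a..b} (ff R)"
proof -
  define g where "g t = j * cos t - j^2 / R" for t
  have gint: "(g has_integral ((j * sin b - j^2/R * b) - (j * sin a - j^2/R * a))) {a..b}"
    unfolding g_def
    by (rule fundamental_theorem_of_calculus[OF ab(2)])
       (use R in \<open>auto intro!: derivative_eq_intros simp: has_real_derivative_iff_has_vector_derivative[symmetric]\<close>)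
  have "integral {a..b} g \<le> integral {a..b} (ff R)"
  proof (rule int_mono_left[OF f_integrable])
    show "g integrable_on {a..b}" using gint by blast
    fix x assume x: "a < x" "x \<le> b"
    have "cos x < cos a" using x ab by (subst cos_mono_less_eq) auto
    moreover have "cos b \<le> cos x" using x ab by (subst cos_mono_le_eq) auto
    ultimately have "R * cos b \<le> R * cos x" "R * cos x < R * cos a"
      using R by (simp_all add: mult_left_mono mult_strict_left_mono)
    then have "j - 1/2 \<le> R * cos x" "R * cos x < j + 1/2" using ca cb by simp_all
    moreover obtain m where m: "j = of_int m" using j(1) Ints_cases by blast
    ultimately have "\<lfloor>R * cos x + 1/2\<rfloor> = m" by (intro floor_unique) auto
    then have "ff R x = (R * cos x - j) * cos x" unfolding D1_def m by simp
    moreover have "(R * cos x - j) * cos x - g x = (R * cos x - j)^2 / R"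
      unfolding g_def using R by (simp add: field_simps power2_eq_square)
    moreover have "0 \<le> (R * cos x - j)^2 / R" using R by simp
    ultimately show "g x \<le> ff R x" by linarith
  qed
  moreover have "j * k * (b - a)^3 / 12 \<le> integral {a..b} g"
  proof -
    have jR: "j / R = (cos a + cos b) / 2" using ca cb R by (simp add: field_simps)
    have "integral {a..b} g = (j * sin b - j^2/R * b) - (j * sin a - j^2/R * a)"
      by (rule integral_unique[OF gint])
    also have "\<dots> = j * (sin b - sin a - (j/R) * (b - a))"
      using R by (simp add: field_simps power2_eq_square)
    also have "\<dots> = j * (sin b - sin a - (cos a + cos b) * (b - a) / 2)" by (simp add: jR)
    finally have e: "integral {a..b} g = j * (sin b - sin a - (cos a + cos b) * (b - a) / 2)" .
    have "k \<le> cos x" if "a \<le> x" "x \<le> b" for x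
    proof -
      have "cos b \<le> cos x" using that ab by (subst cos_mono_le_eq) auto
      then show ?thesis using k by linarith
    qed
    then have "k * (b - a)^3 / 12 \<le> sin b - sin a - (cos a + cos b) * (b - a) / 2"
      by (rule trig_trap[OF ab(2)])
    then have "j * (k * (b - a)^3 / 12) \<le> j * (sin b - sin a - (cos a + cos b) * (b - a) / 2)"
      using j(2) by (rule mult_left_mono)
    then show ?thesis using e by simp
  qed
  ultimately show ?thesis by linarith
qed

lemma piece0:
  fixes R a :: real
  assumes R: "R > 0" and a: "0 \<le> a" "a \<le> pi/2" and ca: "R * cos a = 1/2"
  shows "0 \<le> integral {a..pi/2} (ff R)"
proof -
  have "integral {a..pi/2} (\<lambda>_. 0) \<le> integral {a..pi/2} (ff R)"
  proof (rule int_mono_left[OF f_integrable])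
    show "(\<lambda>_. 0::real) integrable_on {a..pi/2}" by (rule integrable_0)
    fix x assume x: "a < x" "x \<le> pi/2"
    have "cos x < cos a" using x a by (subst cos_mono_less_eq) auto
    then have "R * cos x < R * cos a" using R by simp
    moreover have "0 \<le> cos x" using x a by (intro cos_ge_zero) auto
    ultimately have "\<lfloor>R * cos x + 1/2\<rfloor> = 0" using ca R by (intro floor_unique) auto
    then have "D1 (R * cos x) = R * cos x" unfolding D1_def by simp
    then show "0 \<le> ff R x" using R \<open>0 \<le> cos x\<close> by simp
  qed
  then show ?thesis by simp
qed

lemma ff_lower: "-1/2 \<le> ff R t"
proof -
  have "\<bar>D1 (R * cos t)\<bar> \<le> 1/2" using D1_bound[of "R * cos t"] by linarith
  moreover have "\<bar>cos t\<bar> \<le> 1" by simp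
  ultimately have "\<bar>ff R t\<bar> \<le> 1/2 * 1" unfolding abs_mult by (intro mult_mono) auto
  then show ?thesis by linarith
qed

lemma piece_neg:
  assumes "0 \<le> a"
  shows "- a / 2 \<le> integral {0..a} (ff R)"
proof -
  have "integral {0..a} (\<lambda>_. -1/2::real) \<le> integral {0..a} (ff R)"
    by (rule integral_le[OF _ f_integrable]) (use ff_lower[of R] in auto)
  then show ?thesis using assms by simp
qed

definition th :: "real \<Rightarrow> nat \<Rightarrow> real" where "th R j = arccos ((real j + 1/2) / R)"

lemma th_props:
  assumes R: "R > 0" and j: "real j + 1/2 \<le> R"
  shows "0 \<le> th R j" "th R j \<le> pi/2" "R * cos (th R j) = real j + 1/2"
proof -
  have h: "-1 \<le> (real j + 1/2) / R" "(real j + 1/2) / R \<le> 1" "0 \<le> (real j + 1/2) / R"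
    using R j by (auto simp: field_simps)
  show "0 \<le> th R j" unfolding th_def using h by (simp add: arccos_lbound)
  show "th R j \<le> pi/2" unfolding th_def using h arccos_le_pi2 by blast
  show "R * cos (th R j) = real j + 1/2" unfolding th_def cos_arccos[OF h(1) h(2)] using R by simp
qed

lemma th_mono:
  assumes R: "R > 0" and j: "real (Suc j) + 1/2 \<le> R"
  shows "th R (Suc j) \<le> th R j"
  unfolding th_def using R j by (intro arccos_le_arccos) (auto simp: field_simps)

lemma tail_nonneg:
  assumes R: "R > 0" and j: "real j + 1/2 \<le> R"
  shows "0 \<le> integral {th R j..pi/2} (ff R)"
  using j
proof (induction j)
  case 0
  then show ?case using th_props[OF R 0] R by (intro piece0) auto
next
  case (Suc j)
  have j: "real j + 1/2 \<le> R" using Suc.prems by simp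
  note p1 = th_props[OF R Suc.prems] and p0 = th_props[OF R j]
  have m: "th R (Suc j) \<le> th R j" by (rule th_mono[OF R Suc.prems])
  have "real (Suc j) * 0 * (th R j - th R (Suc j))^3 / 12 \<le> integral {th R (Suc j)..th R j} (ff R)"
    by (rule piece[OF R]) (use p1 p0 m in \<open>auto simp: cos_ge_zero\<close>)
  moreover have "integral {th R (Suc j)..th R j} (ff R) + integral {th R j..pi/2} (ff R)
      = integral {th R (Suc j)..pi/2} (ff R)"
    by (rule Henstock_Kurzweil_Integration.integral_combine[OF m p0(2) f_integrable])
  ultimately show ?case using Suc.IH[OF j] by simp
qed

lemma D1_sym: "D1 y + D1 (-y) \<le> 0"
proof -
  have "\<lfloor>y + 1/2\<rfloor> + \<lfloor>-y + 1/2\<rfloor> > -1"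
    using floor_correct[of "y+1/2"] floor_correct[of "-y+1/2"] by linarith
  then have "\<lfloor>y + 1/2\<rfloor> + \<lfloor>-y + 1/2\<rfloor> \<ge> 0" by linarith
  then have "real_of_int \<lfloor>y + 1/2\<rfloor> + real_of_int \<lfloor>-y + 1/2\<rfloor> \<ge> 0"
    by (metis of_int_0_le_iff of_int_add)
  then show ?thesis unfolding D1_def by simp
qed

lemma reduce:
  "4 * integral {0..pi/2} (ff R) \<le> integral {-pi..pi} (ff R)"
proof -
  let ?F = "ff R"
  let ?G = "\<lambda>x. ?F (pi - x)"
  have c1: "integral {-pi..0} ?F + integral {0..pi} ?F = integral {-pi..pi} ?F"
    by (rule Henstock_Kurzweil_Integration.integral_combine[OF _ _ f_integrable]) auto
  have "integral {-pi..-0} (\<lambda>x. ?F (-x)) = integral {0..pi} ?F"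
    by (rule Henstock_Kurzweil_Integration.integral_reflect_real)
  then have c2: "integral {-pi..0} ?F = integral {0..pi} ?F" by simp
  have c3: "integral {0..pi/2} ?F + integral {pi/2..pi} ?F = integral {0..pi} ?F"
    by (rule Henstock_Kurzweil_Integration.integral_combine[OF _ _ f_integrable]) auto
  have "integral {-pi/2..0} (?F \<circ> (+) pi) = integral {-pi/2+pi..0+pi} ?F"
    by (rule integral_shift_Icc_real)
  then have s1: "integral {pi/2..pi} ?F = integral {-(pi/2)..-0} (\<lambda>x. ?G (-x))"
    by (simp add: o_def)
  have s2: "integral {-(pi/2)..-0} (\<lambda>x. ?G (-x)) = integral {0..pi/2} ?G"
    by (rule Henstock_Kurzweil_Integration.integral_reflect_real)
  have Geq: "?G = (\<lambda>x. - ff (-R) x)" by (simp add: fun_eq_iff)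
  have Gint: "?G integrable_on {0..pi/2}" unfolding Geq by (intro integrable_neg f_integrable)
  have "integral {0..pi/2} ?F \<le> integral {0..pi/2} ?G"
  proof (rule integral_le[OF f_integrable Gint])
    fix x assume x: "x \<in> {0..pi/2}"
    then have "0 \<le> cos x" by (intro cos_ge_zero) auto
    then have "(D1 (R * cos x) + D1 (-(R * cos x))) * cos x \<le> 0"
      using D1_sym by (simp add: mult_nonpos_nonneg)
    then show "?F x \<le> ?G x" by (simp add: algebra_simps)
  qed
  then show ?thesis using c1 c2 c3 s1 s2 by linarith
qed

lemma cos_upper:
  fixes t :: real assumes "0 \<le> t" shows "1 - cos t \<le> t^2 / 2"
proof -
  have "cos 0 - 1 + 0^2/2 \<le> cos t - 1 + t^2/2"
    by (rule DERIV_nonneg_imp_nondecreasing[OF assms])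
       (auto intro!: exI derivative_eq_intros simp: sin_x_le_x)
  then show ?thesis by simp
qed

lemma cos_lower:
  fixes t :: real assumes "0 \<le> t" "t \<le> pi/4" shows "t^2 / 4 \<le> 1 - cos t"
proof -
  have s: "x / 2 \<le> sin x" if "0 \<le> x" "x \<le> pi/4" for x
  proof -
    have "sin 0 - 0/2 \<le> sin x - x/2"
    proof (rule DERIV_nonneg_imp_nondecreasing[OF that(1)])
      fix y assume y: "0 \<le> y" "y \<le> x"
      have "cos (pi/4) \<le> cos y" using y that by (subst cos_mono_le_eq) auto
      moreover have "sqrt 2 \<ge> 1" by simp
      ultimately have "cos y - 1/2 \<ge> 0" unfolding cos_45 by linarith
      then show "\<exists>d. ((\<lambda>x. sin x - x / 2) has_real_derivative d) (at y) \<and> 0 \<le> d"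
        by (auto intro!: exI derivative_eq_intros)
    qed
    then show ?thesis by simp
  qed
  have "1 - cos 0 - 0^2/4 \<le> 1 - cos t - t^2/4"
    by (rule DERIV_nonneg_imp_nondecreasing[OF assms(1)])
       (use s assms in \<open>auto intro!: exI derivative_eq_intros\<close>)
  then show ?thesis by simp
qed

lemma main_bound:
  fixes R e :: real
  assumes R: "R \<ge> 10" and e: "e = R + 1/2 - of_int \<lfloor>R + 1/2\<rfloor>" "0 \<le> e" "e \<le> 1/16000"
  shows "1 / (20 * sqrt R) \<le> integral {-pi..pi} (ff R)"
proof -
  define n where "n = \<lfloor>R + 1/2\<rfloor>"
  have Rn: "real_of_int n = R + 1/2 - e" using e(1) unfolding n_def by simp
  have n2: "n \<ge> 3" using Rn R e(2,3) by linarith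
  define M where "M = nat (n - 2)"
  have RM: "real M = R - 3/2 - e" using n2 Rn unfolding M_def by simp
  have R0: "R > 0" using R by simp
  let ?N = "Suc M"
  have hN: "real ?N + 1/2 \<le> R" "real M + 1/2 \<le> R" using RM e(2) by auto
  define a where "a = th R ?N"
  define b where "b = th R M"
  note pa = th_props[OF R0 hN(1), folded a_def] and pb = th_props[OF R0 hN(2), folded b_def]
  have ab: "a \<le> b" unfolding a_def b_def by (rule th_mono[OF R0 hN(1)])
  have ca: "R * cos a = R - e" using pa(3) RM by simp
  have cb: "R * cos b = R - e - 1" using pb(3) RM by simp
  have d1: "integral {0..a} (ff R) + integral {a..pi/2} (ff R) = integral {0..pi/2} (ff R)"
    by (rule Henstock_Kurzweil_Integration.integral_combine[OF _ _ f_integrable]) (use pa in auto)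
  have d2: "integral {a..b} (ff R) + integral {b..pi/2} (ff R) = integral {a..pi/2} (ff R)"
    by (rule Henstock_Kurzweil_Integration.integral_combine[OF ab _ f_integrable]) (use pb in auto)
  have tail: "0 \<le> integral {b..pi/2} (ff R)" unfolding b_def by (rule tail_nonneg[OF R0 hN(2)])
  have neg: "- a / 2 \<le> integral {0..a} (ff R)" by (rule piece_neg) (use pa in auto)
  have cb2: "1/2 \<le> cos b"
  proof -
    have "R * (1/2) \<le> R * cos b" using cb R e(2,3) by linarith
    then show ?thesis using R0 by simp
  qed
  have mp: "real ?N * (1/2) * (b - a)^3 / 12 \<le> integral {a..b} (ff R)"
    by (rule piece[OF R0]) (use pa pb ab cb2 in \<open>auto simp: Ints_of_nat\<close>)
  define s where "s = sqrt R"
  have s0: "s > 0" and ss: "s * s = R" using R0 unfolding s_def by auto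
  have "sqrt 2 < 3/2" by (rule real_less_lsqrt) (auto simp: power2_eq_square)
  then have c45: "cos (pi/4) \<le> cos a"
  proof -
    have "R * 0.9 \<le> R * cos a" using ca R e(2,3) by linarith
    then have "0.9 \<le> cos a" using R0 by simp
    then show ?thesis using \<open>sqrt 2 < 3/2\<close> unfolding cos_45 by linarith
  qed
  have a4: "a \<le> pi/4" using c45 pa by (subst (asm) cos_mono_le_eq) auto
  have "a^2/4 \<le> 1 - cos a" by (rule cos_lower) (use pa a4 in auto)
  moreover have "1 - cos a = e / R" using ca R0 by (simp add: field_simps)
  ultimately have "a^2 * R \<le> 4 * e" using R0 by (simp add: field_simps)
  moreover have "(a * s)^2 = a^2 * R" using R0 unfolding s_def by (simp add: power_mult_distrib)
  ultimately have "(a * s)^2 \<le> 1/4000" using e(2,3) by linarith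
  moreover have "(1/60::real)^2 = 1/3600" by (simp add: power2_eq_square)
  ultimately have "(a * s)^2 \<le> (1/60)^2" by linarith
  then have as: "a * s \<le> 1/60" by (rule power2_le_imp_le) simp
  have "1 - cos b \<le> b^2 / 2" by (rule cos_upper) (use pb in auto)
  moreover have "1 - cos b = (1 + e) / R" using cb R0 by (simp add: field_simps)
  ultimately have "(1 + e) / R \<le> b^2 / 2" by linarith
  then have "1 + e \<le> b^2 / 2 * R" using R0 by (simp add: divide_le_eq)
  then have "2 \<le> b^2 * R" using e(2) by linarith
  moreover have "(b * s)^2 = b^2 * R" using R0 unfolding s_def by (simp add: power_mult_distrib)
  moreover have "(7/5::real)^2 = 49/25" by (simp add: power2_eq_square)
  ultimately have "(7/5)^2 \<le> (b * s)^2" by linarith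
  then have bs: "7/5 \<le> b * s" by (rule power2_le_imp_le) (use pb s0 in simp)
  have "(b - a) * s = b * s - a * s" by (simp add: left_diff_distrib)
  then have bas: "1 \<le> (b - a) * s" using as bs by linarith
  then have "1 \<le> ((b - a) * s)^3" by (rule one_le_power)
  moreover have "((b - a) * s)^3 = (b - a)^3 * (s * s * s)" by (simp add: power_mult_distrib power3_eq_cube)
  ultimately have c3: "1 \<le> (b - a)^3 * (R * s)" using ss by simp
  have NR: "real ?N \<ge> R / 2" using RM R e(2,3) by linarith
  define u where "u = 1 / s"
  have u0: "u > 0" using s0 unfolding u_def by simp
  have c4: "u / R \<le> (b - a)^3"
  proof -
    have "1 / (R * s) \<le> (b - a)^3" using c3 R0 s0 by (simp add: divide_le_eq mult.commute)
    then show ?thesis unfolding u_def by (simp add: mult.commute)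
  qed
  have "R / 2 * (u / R) \<le> real ?N * (b - a)^3"
    using NR c4 R0 u0 by (intro mult_mono) auto
  moreover have "R / 2 * (u / R) = u / 2" using R0 by simp
  ultimately have main: "u / 48 \<le> real ?N * (1/2) * (b - a)^3 / 12" by simp
  have an: "a / 2 \<le> u / 120" using as s0 unfolding u_def by (simp add: field_simps)
  have "u / 80 \<le> integral {0..pi/2} (ff R)"
    using main an mp neg tail d1 d2 by linarith
  then have "1 / (20 * sqrt R) \<le> 4 * integral {0..pi/2} (ff R)" unfolding u_def s_def by simp
  then show ?thesis using reduce[of R] by linarith
qed


lemma scale:
  assumes d: "\<delta> > 0"
  shows "Dd \<delta> (r * cos t) * cos t = \<delta> * ff (r / \<delta>) t"
proof -
  have "r * cos t / \<delta> = r / \<delta> * cos t" by simp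
  then show ?thesis using d unfolding Dd_def Qd_def D1_def by (simp add: algebra_simps)
qed

theorem lemma5p1:
  shows "\<exists>\<epsilon>0>0. \<exists>C1>0. \<exists>R0. \<forall>r \<delta> :: real.
    r > 0 \<longrightarrow> \<delta> > 0 \<longrightarrow>
    (let R = r / \<delta>; \<epsilon> = R + 1/2 - of_int \<lfloor>R + 1/2\<rfloor> in
      0 \<le> \<epsilon> \<longrightarrow> \<epsilon> \<le> \<epsilon>0 \<longrightarrow> R \<ge> R0 \<longrightarrow>
      integral {-pi..pi} (\<lambda>\<theta>. Dd \<delta> (r * cos \<theta>) * cos \<theta>)
        \<ge> C1 * \<delta> powr (3/2) / sqrt r)"
  apply (rule exI[where x="1/16000"], rule conjI, simp)
  apply (rule exI[where x="1/20"], rule conjI, simp)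
  apply (rule exI[where x=10])
  unfolding Let_def
proof (intro allI impI)
  fix r \<delta> :: real
  assume r: "r > 0" and d: "\<delta> > 0"
    and e1: "0 \<le> r / \<delta> + 1/2 - of_int \<lfloor>r / \<delta> + 1/2\<rfloor>"
    and e2: "r / \<delta> + 1/2 - of_int \<lfloor>r / \<delta> + 1/2\<rfloor> \<le> 1/16000"
    and R: "10 \<le> r / \<delta>"
  define R where "R = r / \<delta>"
  have mb: "1 / (20 * sqrt R) \<le> integral {-pi..pi} (ff R)"
    by (rule main_bound[OF _ refl]) (use R e1 e2 in \<open>auto simp: R_def\<close>)
  have "integral {-pi..pi} (\<lambda>\<theta>. Dd \<delta> (r * cos \<theta>) * cos \<theta>) = integral {-pi..pi} (\<lambda>\<theta>. \<delta> * ff R \<theta>)"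
    by (rule arg_cong[where f="integral {-pi..pi}"], rule ext) (simp only: scale[OF d] R_def)
  also have "\<dots> = \<delta> * integral {-pi..pi} (ff R)"
    using integral_mult[OF f_integrable, of \<delta> R "-pi" pi] by simp
  finally have eq: "integral {-pi..pi} (\<lambda>\<theta>. Dd \<delta> (r * cos \<theta>) * cos \<theta>) = \<delta> * integral {-pi..pi} (ff R)" .
  have P: "\<delta> powr (3/2) = \<delta> * sqrt \<delta>"
  proof -
    have "\<delta> powr (3/2) = \<delta> powr (1 + 1/2)" by simp
    also have "\<dots> = \<delta> powr 1 * \<delta> powr (1/2)" by (rule powr_add)
    finally show ?thesis using d by (simp add: powr_half_sqrt)
  qed
  have "sqrt R > 0" unfolding R_def using r d by simp
  moreover have "sqrt R = sqrt r / sqrt \<delta>" unfolding R_def by (simp add: real_sqrt_divide)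
  ultimately have "1/20 * \<delta> powr (3/2) / sqrt r = \<delta> * (1 / (20 * sqrt R))"
    using r d \<open>sqrt R > 0\<close> P by (simp add: field_simps)
  also have "\<dots> \<le> \<delta> * integral {-pi..pi} (ff R)"
    using mb d by (intro mult_left_mono) auto
  finally show "1/20 * \<delta> powr (3/2) / sqrt r \<le> integral {-pi..pi} (\<lambda>\<theta>. Dd \<delta> (r * cos \<theta>) * cos \<theta>)"
    using eq by simp
qed

end
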